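(* Let $T$ be a compactum, $\mathbf a,\mathbf b,\mathbf c$ entourages of $T$, $p\in T$ and $k>2$. If $\mathbf a-\mathbf b-p\ (k)$ and $\mathbf b-\mathbf c-p\ (k)$, then $\mathbf a-\mathbf c-p\ (k)$.
   Context: Let $T$ be a compact Hausdorff space, $S^2T$ the space of unordered pairs of points of $T$ (diagonal allowed), $\Delta^2T$ the diagonal. An entourage is a neighborhood of $\Delta^2T$ in $S^2T$. For an entourage $\mathbf e$, $\Delta_{\mathbf e}$ is the graph distance on $T$ of the graph with vertex set $T$ and edges the pairs in $\mathbf e$; for sets, $\Delta_{\mathbf e}(a,b)=\inf$ over $x\in a,y\in b$ and $\widetilde\Delta_{\mathbf e}(a,b)=\sup$. A set is $\mathbf e$-small if its $\Delta_{\mathbf e}$-diameter is $\le1$. Entourages $\mathbf a,\mathbf b$ are unlinked ($\mathbf a\bowtie\mathbf b$) if $T=a\cup b$ for some $\mathbf a$-small $a$ and $\mathbf b$-small $b$, linked otherwise. Standing conventions: every entourage considered is linked with itself and $T$ has $\Delta_{\mathbf a}$-diameter $>4$. For $\mathbf a\bowtie\mathbf b$, $\mathrm{sh}_{\mathbf a}\mathbf b=\bigcap\{a: a\ \mathbf a\text{-small},\ T\setminus a\ \mathbf b\text{-small}\}$. For $p\in T$, $\mathbf a-\mathbf b-p\ (k)$ means $\mathbf a\bowtie\mathbf b$ and $\Delta_{\mathbf b}(\mathrm{sh}_{\mathbf b}\mathbf a,b)>k$ for every $\mathbf b$-small neighborhood $b$ of $p$. *)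

theory Defs
  imports Main "HOL-Library.Extended_Nat"
begin

text \<open>The compactum T is the whole of a type 'a of class t2_space with
  compact UNIV. An unordered pair {x,y} is encoded by the symmetric pair
  (x,y),(y,x) of T x T; so an entourage (a neighbourhood of the diagonal in
  the symmetric square S^2 T) is a symmetric relation containing an open
  neighbourhood of the diagonal of T x T.\<close>

definition entourage :: "('a::topological_space \<times> 'a) set \<Rightarrow> bool" where
  "entourage E \<longleftrightarrow> sym E \<and>
     (\<exists>U. open U \<and> (\<forall>x. (x, x) \<in> U) \<and> U \<subseteq> E)"

text \<open>Graph distance of the graph with vertex set T and edge set E.
  Infinity if there is no path.\<close>
definition gdist :: "('a \<times> 'a) set \<Rightarrow> 'a \<Rightarrow> 'a \<Rightarrow> enat" where
  "gdist E x y = (Inf {enat n | n. (x, y) \<in> (E \<union> Id) ^^ n})"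

definition setdist :: "('a \<times> 'a) set \<Rightarrow> 'a set \<Rightarrow> 'a set \<Rightarrow> enat" where
  "setdist E A B = (Inf {gdist E x y | x y. x \<in> A \<and> y \<in> B})"

definition diam :: "('a \<times> 'a) set \<Rightarrow> 'a set \<Rightarrow> enat" where
  "diam E A = (Sup {gdist E x y | x y. x \<in> A \<and> y \<in> A})"

definition small :: "('a \<times> 'a) set \<Rightarrow> 'a set \<Rightarrow> bool" where
  "small E A \<longleftrightarrow> diam E A \<le> 1"

definition unlinked :: "('a \<times> 'a) set \<Rightarrow> ('a \<times> 'a) set \<Rightarrow> bool" where
  "unlinked A B \<longleftrightarrow> (\<exists>a b. small A a \<and> small B b \<and> a \<union> b = UNIV)"

text \<open>sh_A B, defined for unlinked A, B.\<close>
definition sh :: "('a \<times> 'a) set \<Rightarrow> ('a \<times> 'a) set \<Rightarrow> 'a set" where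
  "sh A B = \<Inter> {a. small A a \<and> small B (UNIV - a)}"

definition sep :: "('a::topological_space \<times> 'a) set \<Rightarrow> ('a \<times> 'a) set \<Rightarrow> 'a \<Rightarrow> nat \<Rightarrow> bool" where
  "sep A B p k \<longleftrightarrow> unlinked A B \<and>
     (\<forall>b. small B b \<and> (\<exists>U. open U \<and> p \<in> U \<and> U \<subseteq> b) \<longrightarrow>
          setdist B (sh B A) b > enat k)"

text \<open>Standing conventions for an entourage: linked with itself and T has
  diameter > 4.\<close>
definition admissible :: "('a::topological_space \<times> 'a) set \<Rightarrow> bool" where
  "admissible E \<longleftrightarrow> entourage E \<and> \<not> unlinked E E \<and> diam E UNIV > 4"

end

theory Submission
  imports Defs
begin

lemma relpow_refl: "(x, x) \<in> (E \<union> Id) ^^ n"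
  by (induction n) auto

lemma relpow_mono_refl:
  assumes "(x, y) \<in> (E \<union> Id) ^^ m" "m \<le> n"
  shows "(x, y) \<in> (E \<union> Id) ^^ n"
proof -
  obtain d where d: "n = m + d" using assms(2) le_Suc_ex by blast
  have "(y, y) \<in> (E \<union> Id) ^^ d" by (rule relpow_refl)
  then have "(x, y) \<in> (E \<union> Id) ^^ m O (E \<union> Id) ^^ d" using assms(1) by blast
  then show ?thesis unfolding d relpow_add .
qed

lemma gd_le: "gdist E x y \<le> enat n \<longleftrightarrow> (x, y) \<in> (E \<union> Id) ^^ n"
proof
  assume "gdist E x y \<le> enat n"
  then have "\<forall>z>enat n. \<exists>a\<in>{enat n |n. (x, y) \<in> (E \<union> Id) ^^ n}. z > a"
    unfolding gdist_def Inf_le_iff .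
  then obtain a where "a \<in> {enat n |n. (x, y) \<in> (E \<union> Id) ^^ n}" "a < enat (Suc n)"
    by (meson enat_ord_simps(2) lessI)
  then obtain m where m: "enat m < enat (Suc n)" "(x, y) \<in> (E \<union> Id) ^^ m"
    by blast
  then show "(x, y) \<in> (E \<union> Id) ^^ n" using relpow_mono_refl by fastforce
next
  assume "(x, y) \<in> (E \<union> Id) ^^ n"
  then show "gdist E x y \<le> enat n" unfolding gdist_def by (intro Inf_lower) blast
qed

lemma small_iff: "small E s \<longleftrightarrow> (\<forall>x\<in>s. \<forall>y\<in>s. (x, y) \<in> E \<union> Id)"
proof -
  have "small E s \<longleftrightarrow> (\<forall>x\<in>s. \<forall>y\<in>s. gdist E x y \<le> enat 1)"
    unfolding small_def diam_def Sup_le_iff one_enat_def by blast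
  also have "\<dots> \<longleftrightarrow> (\<forall>x\<in>s. \<forall>y\<in>s. (x, y) \<in> E \<union> Id)"
    unfolding gd_le by simp
  finally show ?thesis .
qed

lemma small_subset: "small E s \<Longrightarrow> t \<subseteq> s \<Longrightarrow> small E t"
  unfolding small_iff by blast

lemma setdist_lower: "setdist E A B > enat k \<Longrightarrow> x \<in> A \<Longrightarrow> y \<in> B \<Longrightarrow> gdist E x y > enat k"
  unfolding setdist_def
  by (rule less_le_trans, assumption, rule Inf_lower, blast)

lemma setdist_greater: "(\<And>x y. x \<in> A \<Longrightarrow> y \<in> B \<Longrightarrow> gdist E x y > enat k) \<Longrightarrow> setdist E A B > enat k"
proof -
  assume h: "\<And>x y. x \<in> A \<Longrightarrow> y \<in> B \<Longrightarrow> gdist E x y > enat k"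
  have "enat (Suc k) \<le> setdist E A B"
    unfolding setdist_def by (rule Inf_greatest) (use h Suc_ile_eq in blast)
  then show ?thesis using Suc_ile_eq by blast
qed

lemma small_nbhd:
  fixes p :: "'a::topological_space"
  assumes "entourage E"
  shows "\<exists>V. open V \<and> p \<in> V \<and> small E V"
proof -
  obtain U where U: "open U" "\<forall>x. (x, x) \<in> U" "U \<subseteq> E" using assms unfolding entourage_def by blast
  from U(1) have "(p, p) \<in> U" using U(2) by blast
  from open_prod_elim[OF U(1) this] obtain A B where
    AB: "open A" "open B" "(p, p) \<in> A \<times> B" "A \<times> B \<subseteq> U" by metis
  show ?thesis
    by (rule exI[of _ "A \<inter> B"]) (use AB U in \<open>auto simp: small_iff\<close>)
qed

lemma sh_nonempty:
  assumes "unlinked A B" "\<not> unlinked B B" "diam A UNIV > 4"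
  shows "sh B A \<noteq> {}"
proof
  assume e: "sh B A = {}"
  have "\<forall>x y. (x, y) \<in> (A \<union> Id) ^^ Suc (Suc 0)"
  proof (intro allI)
    fix x y
    from e obtain z1 where z1: "small B z1" "small A (UNIV - z1)" "x \<notin> z1"
      unfolding sh_def by blast
    from e obtain z2 where z2: "small B z2" "small A (UNIV - z2)" "y \<notin> z2"
      unfolding sh_def by blast
    from assms(2) z1 z2 obtain q where q: "q \<notin> z1" "q \<notin> z2"
      unfolding unlinked_def by blast
    have "(x, q) \<in> A \<union> Id" using z1 q unfolding small_iff by blast
    moreover have "(q, y) \<in> A \<union> Id" using z2 q unfolding small_iff by blast
    ultimately show "(x, y) \<in> (A \<union> Id) ^^ Suc (Suc 0)" by auto
  qed
  then have "diam A UNIV \<le> enat 2"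
    unfolding diam_def by (auto intro!: Sup_least simp: gd_le numeral_2_eq_2)
  with assms(3) have "enat 4 < enat 2" unfolding numeral_eq_enat using less_le_trans by blast
  then show False by simp
qed


theorem lemma3p17:
  fixes a b c :: "('a::t2_space \<times> 'a) set" and p :: 'a and k :: nat
  assumes "compact (UNIV :: 'a set)"
    and "admissible a" and "admissible b" and "admissible c"
    and "k > 2"
    and "sep a b p k" and "sep b c p k"
  shows "sep a c p k"
proof -
  have ea: "diam a UNIV > 4" using assms(2) unfolding admissible_def by blast
  have eb: "entourage b" "\<not> unlinked b b" using assms(3) unfolding admissible_def by blast+
  have ec: "entourage c" "\<not> unlinked c c" using assms(4) unfolding admissible_def by blast+
  have uab: "unlinked a b" using assms(6) unfolding sep_def by blast
  have HA: "\<And>\<beta>. small b \<beta> \<Longrightarrow> (\<exists>U. open U \<and> p \<in> U \<and> U \<subseteq> \<beta>) \<Longrightarrow> setdist b (sh b a) \<beta> > enat k"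
    using assms(6) unfolding sep_def by blast
  have HB: "\<And>\<gamma>. small c \<gamma> \<Longrightarrow> (\<exists>U. open U \<and> p \<in> U \<and> U \<subseteq> \<gamma>) \<Longrightarrow> setdist c (sh c b) \<gamma> > enat k"
    using assms(7) unfolding sep_def by blast
  obtain Vb where Vb: "open Vb" "p \<in> Vb" "small b Vb" using small_nbhd[OF eb(1)] by blast
  obtain Vc where Vc: "open Vc" "p \<in> Vc" "small c Vc" using small_nbhd[OF ec(1)] by blast
  have k3: "3 \<le> k" using assms(5) by simp
  have F1: "w \<notin> sh b a" if "(w, p) \<in> (b \<union> Id) ^^ k" for w
  proof
    assume w: "w \<in> sh b a"
    have "\<exists>U. open U \<and> p \<in> U \<and> U \<subseteq> Vb" using Vb by blast
    then have "setdist b (sh b a) Vb > enat k" using HA[OF Vb(3)] by simp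
    then have "gdist b w p > enat k" using setdist_lower[OF _ w Vb(2)] by simp
    moreover have "gdist b w p \<le> enat k" using gd_le[THEN iffD2, OF that] .
    ultimately show False by simp
  qed
  have Sne: "sh b a \<noteq> {}" using sh_nonempty[OF uab eb(2) ea] .
  then obtain t where t: "t \<in> sh b a" by blast
  obtain z where z: "small b z" "small a (UNIV - z)"
  proof -
    from uab obtain \<alpha> \<beta> where ab: "small a \<alpha>" "small b \<beta>" "\<alpha> \<union> \<beta> = UNIV"
      unfolding unlinked_def by blast
    have "small a (UNIV - \<beta>)" by (rule small_subset[OF ab(1)]) (use ab(3) in blast)
    then show ?thesis using that[of \<beta>] ab(2) by blast
  qed
  have tz: "t \<in> z" using t z unfolding sh_def by blast
  have obp: "\<exists>y. small c y \<and> small b (UNIV - y) \<and> s \<notin> y"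
    if "small c \<gamma>" "\<exists>U. open U \<and> p \<in> U \<and> U \<subseteq> \<gamma>" "g \<in> \<gamma>" "(s, g) \<in> (c \<union> Id) ^^ k" for s g \<gamma>
  proof -
    have "s \<notin> sh c b"
    proof
      assume s: "s \<in> sh c b"
      have "gdist c s g > enat k" using setdist_lower[OF HB[OF that(1,2)] s that(3)] .
      moreover have "gdist c s g \<le> enat k" using gd_le[THEN iffD2, OF that(4)] .
      ultimately show False by simp
    qed
    then show ?thesis unfolding sh_def by blast
  qed
  have Key: "\<exists>y. small c y \<and> small a (UNIV - y) \<and> s \<notin> y"
    if H: "small c \<gamma>" "\<exists>U. open U \<and> p \<in> U \<and> U \<subseteq> \<gamma>" "g \<in> \<gamma>" "(s, g) \<in> (c \<union> Id) ^^ k" for s g \<gamma>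
  proof -
    obtain y where y: "small c y" "small b (UNIV - y)" "s \<notin> y" using obp[OF H] by blast
    have pg: "p \<in> \<gamma>" using H(2) by blast
    obtain y' where y': "small c y'" "small b (UNIV - y')" "p \<notin> y'"
      using obp[OF H(1,2) pg relpow_refl] by blast
    from ec(2) y y' obtain m where m: "m \<notin> y" "m \<notin> y'" unfolding unlinked_def by blast
    have "UNIV - y \<subseteq> UNIV - z"
    proof
      fix v assume v: "v \<in> UNIV - y"
      have "v \<notin> z"
      proof
        assume vz: "v \<in> z"
        have 1: "(t, v) \<in> b \<union> Id" using z(1) tz vz unfolding small_iff by blast
        have 2: "(v, m) \<in> b \<union> Id" using y(2) v m unfolding small_iff by blast
        have 3: "(m, p) \<in> b \<union> Id" using y'(2) m y'(3) unfolding small_iff by blast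
        have "(t, p) \<in> (b \<union> Id) ^^ Suc (Suc (Suc 0))" using 1 2 3 by auto
        then have "(t, p) \<in> (b \<union> Id) ^^ k" by (rule relpow_mono_refl) (use k3 in simp)
        then show False using F1 t by blast
      qed
      then show "v \<in> UNIV - z" by simp
    qed
    then have "small a (UNIV - y)" by (rule small_subset[OF z(2)])
    then show ?thesis using y by blast
  qed
  have uac: "unlinked a c"
  proof -
    have "\<exists>U. open U \<and> p \<in> U \<and> U \<subseteq> Vc" using Vc(1,2) by blast
    from Key[OF Vc(3) this Vc(2) relpow_refl] obtain y where y: "small c y" "small a (UNIV - y)"
      by blast
    have "(UNIV - y) \<union> y = UNIV" by blast
    then show ?thesis unfolding unlinked_def using y by blast
  qed
  show ?thesis unfolding sep_def
  proof (intro conjI uac allI impI)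
    fix \<gamma> assume h: "small c \<gamma> \<and> (\<exists>U. open U \<and> p \<in> U \<and> U \<subseteq> \<gamma>)"
    show "setdist c (sh c a) \<gamma> > enat k"
    proof (rule setdist_greater, rule ccontr)
      fix s g assume s: "s \<in> sh c a" and g: "g \<in> \<gamma>" and n: "\<not> enat k < gdist c s g"
      have "gdist c s g \<le> enat k" using n by (simp add: not_less)
      then have "(s, g) \<in> (c \<union> Id) ^^ k" by (rule gd_le[THEN iffD1])
      from Key[OF conjunct1[OF h] conjunct2[OF h] g this] obtain y
        where y: "small c y" "small a (UNIV - y)" "s \<notin> y" by blast
      have "s \<in> y" using s y(1,2) unfolding sh_def by blast
      then show False using y(3) by simp
    qed
  qed
qed

end
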